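(* Let $\beta=0$ and $p>1$. Then for $c^2<1$, $$d(0,c)=(1-c^2)^{\frac{3p+5}{4(p-1)}}\,d(0,0).$$ Consequently: (i) if $p\ge9$, then $\partial_c^2 d(0,c)<0$ for all $c^2<1$; (ii) if $p<9$, then $\partial_c^2d(0,c)<0$ for $c^2<\frac{2(p-1)}{p+7}$ and $\partial_c^2d(0,c)>0$ for $\frac{2(p-1)}{p+7}<c^2<1$.
   Context: Setting: $f\in C^2$ homogeneous of degree $p$ (i.e. $f(\lambda s)=\lambda^pf(s)$ for $\lambda>0$), and $F=\int_0^sf$, taking a positive value somewhere. Definitions: - $I(u)=\int u_{xx}^2-\beta u_x^2+(1-c^2)u^2$ and $K(u)=(p+1)\int F(u)$. - $m(\beta,c)=\inf\{I/K^{2/(p+1)}:u\in H^2,K(u)>0\}$. - $d(\beta,c)=\frac{p-1}{2(p+1)}m(\beta,c)^{(p+1)/(p-1)}$ (which is positive). *)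

theory Defs
  imports "HOL-Analysis.Analysis"
begin

definition C2_fun :: "(real \<Rightarrow> real) \<Rightarrow> bool" where
  "C2_fun f \<longleftrightarrow> (\<exists>f1 f2. (\<forall>x. (f has_real_derivative f1 x) (at x)) \<and>
      (\<forall>x. (f1 has_real_derivative f2 x) (at x)) \<and> continuous_on UNIV f2)"

definition homogeneous_of_degree :: "real \<Rightarrow> (real \<Rightarrow> real) \<Rightarrow> bool" where
  "homogeneous_of_degree p f \<longleftrightarrow> (\<forall>l>0. \<forall>s. f (l * s) = l powr p * f s)"

definition prim :: "(real \<Rightarrow> real) \<Rightarrow> real \<Rightarrow> real" where
  "prim f s = interval_lebesgue_integral lborel (ereal 0) (ereal s) f"

text \<open>H^2(R), via representatives: u is differentiable with derivative v,
  v(x) = v(0) + int_0^x w (so w is the weak second derivative), and u, v, w in L^2.\<close>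
definition H2_triple :: "(real \<Rightarrow> real) \<Rightarrow> (real \<Rightarrow> real) \<Rightarrow> (real \<Rightarrow> real) \<Rightarrow> bool" where
  "H2_triple u v w \<longleftrightarrow>
     (\<forall>x. (u has_real_derivative v x) (at x)) \<and>
     w \<in> borel_measurable lborel \<and>
     (\<forall>x. v x = v 0 + interval_lebesgue_integral lborel (ereal 0) (ereal x) w) \<and>
     integrable lborel (\<lambda>x. (u x)\<^sup>2) \<and> integrable lborel (\<lambda>x. (v x)\<^sup>2) \<and>
     integrable lborel (\<lambda>x. (w x)\<^sup>2)"

definition I_fun :: "real \<Rightarrow> real \<Rightarrow> (real \<Rightarrow> real) \<Rightarrow> (real \<Rightarrow> real) \<Rightarrow> (real \<Rightarrow> real) \<Rightarrow> real" where
  "I_fun beta c u v w = (LINT x|lborel. (w x)\<^sup>2 - beta * (v x)\<^sup>2 + (1 - c\<^sup>2) * (u x)\<^sup>2)"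

definition K_fun :: "real \<Rightarrow> (real \<Rightarrow> real) \<Rightarrow> (real \<Rightarrow> real) \<Rightarrow> real" where
  "K_fun p f u = (p + 1) * (LINT x|lborel. prim f (u x))"

definition m_fun :: "real \<Rightarrow> (real \<Rightarrow> real) \<Rightarrow> real \<Rightarrow> real \<Rightarrow> real" where
  "m_fun p f beta c = Inf {I_fun beta c u v w / (K_fun p f u) powr (2 / (p + 1)) | u v w.
       H2_triple u v w \<and> K_fun p f u > 0}"

definition d_fun :: "real \<Rightarrow> (real \<Rightarrow> real) \<Rightarrow> real \<Rightarrow> real \<Rightarrow> real" where
  "d_fun p f beta c = (p - 1) / (2 * (p + 1)) * (m_fun p f beta c) powr ((p + 1) / (p - 1))"

end

theory Submission
  imports Defs "HOL-Probability.Distributions"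
begin

lemma prim_deriv:
  assumes "continuous_on UNIV f"
  shows "(prim f has_real_derivative f x) (at x)"
proof -
  let ?a = "min 0 x - 1" and ?b = "max 0 x + 1"
  have c: "continuous_on {?a..?b} f" using continuous_on_subset[OF assms] by blast
  have "((\<lambda>u. interval_lebesgue_integral lborel (ereal 0) (ereal u) f) has_vector_derivative (f x)) (at x within {?a..?b})"
    by (rule interval_integral_FTC2[OF _ _ c]) auto
  then have "((\<lambda>u. interval_lebesgue_integral lborel (ereal 0) (ereal u) f) has_vector_derivative (f x)) (at x)"
    by (subst (asm) at_within_interior[of x]) auto
  then show ?thesis
    unfolding prim_def has_real_derivative_iff_has_vector_derivative[symmetric] .
qed

lemma prim_zero[simp]: "prim f 0 = 0"
  unfolding prim_def by simp


lemma C2_cont: "C2_fun f \<Longrightarrow> continuous_on UNIV f"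
  unfolding C2_fun_def
  by (metis DERIV_isCont continuous_at_imp_continuous_on)

lemma prim_homog:
  assumes "continuous_on UNIV f" "homogeneous_of_degree p f" "l > 0"
  shows "prim f (l * s) = l powr (p+1) * prim f s"
proof -
  let ?g = "\<lambda>s. prim f (l * s) - l powr (p+1) * prim f s"
  have "\<forall>x. DERIV ?g x :> 0"
  proof
    fix x
    have d1: "DERIV (\<lambda>s. prim f (l * s)) x :> f (l*x) * l"
      by (rule DERIV_chain2[OF prim_deriv[OF assms(1)]]) (auto intro!: derivative_eq_intros)
    have "DERIV ?g x :> f (l*x) * l - l powr (p+1) * f x"
      by (intro DERIV_diff d1 DERIV_cmult prim_deriv[OF assms(1)])
    moreover have "f (l*x) * l - l powr (p+1) * f x = 0"
      using assms(2,3) unfolding homogeneous_of_degree_def by (simp add: powr_add)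
    ultimately show "DERIV ?g x :> 0" by simp
  qed
  then have "?g s = ?g 0" by (rule DERIV_isconst_all)
  then show ?thesis by simp
qed


lemma w_local:
  fixes w :: "real \<Rightarrow> real"
  assumes wm: "w \<in> borel_measurable lborel" and wi: "integrable lborel (\<lambda>x. (w x)\<^sup>2)"
  shows "set_integrable lborel {a..b} w"
  unfolding set_integrable_def
proof (rule Bochner_Integration.integrable_bound)
  show "integrable lborel (\<lambda>x. indicat_real {a..b} x + (w x)\<^sup>2)"
    by (intro Bochner_Integration.integrable_add wi) (simp add: integrable_indicator_iff emeasure_lborel_Icc_eq)
  show "(\<lambda>x. indicat_real {a..b} x *\<^sub>R w x) \<in> borel_measurable lborel"
    by (intro borel_measurable_scaleR borel_measurable_indicator wm) simp
  show "AE x in lborel. norm (indicat_real {a..b} x *\<^sub>R w x) \<le> norm (indicat_real {a..b} x + (w x)\<^sup>2)"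
  proof (rule AE_I2)
    fix x
    have "\<bar>w x\<bar> \<le> 1 + (w x)\<^sup>2"
    proof -
      have "0 \<le> (\<bar>w x\<bar> - 1)\<^sup>2" by simp
      then show ?thesis unfolding power2_diff power2_abs by simp
    qed
    then show "norm (indicat_real {a..b} x *\<^sub>R w x) \<le> norm (indicat_real {a..b} x + (w x)\<^sup>2)"
      by (auto simp: indicator_def)
  qed
qed

lemma v_diff:
  fixes u v w :: "real \<Rightarrow> real"
  assumes H: "H2_triple u v w" and xy: "x \<le> y"
  shows "v y - v x = (LINT t|lborel. indicat_real {x..y} t * w t)"
proof -
  have wm: "w \<in> borel_measurable lborel" and wi: "integrable lborel (\<lambda>x. (w x)\<^sup>2)"
    and vv: "\<And>x. v x = v 0 + interval_lebesgue_integral lborel (ereal 0) (ereal x) w"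
    using H unfolding H2_triple_def by blast+
  let ?lo = "min 0 (min x y)" and ?hi = "max 0 (max x y)"
  have si: "set_integrable lborel {?lo..?hi} w" by (rule w_local[OF wm wi])
  have le: "min (ereal 0) (min (ereal x) (ereal y)) \<le> max (ereal 0) (max (ereal x) (ereal y))"
    by (simp add: min_le_iff_disj le_max_iff_disj)
  have sub: "einterval (min (ereal 0) (min (ereal x) (ereal y))) (max (ereal 0) (max (ereal x) (ereal y))) \<subseteq> {?lo..?hi}"
    by (auto simp: einterval_iff min_def max_def split: if_splits)
  have "interval_lebesgue_integrable lborel (min (ereal 0) (min (ereal x) (ereal y))) (max (ereal 0) (max (ereal x) (ereal y))) w"
    unfolding interval_lebesgue_integrable_def if_P[OF le]
    by (rule set_integrable_subset[OF si _ sub]) simp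
  from interval_integral_sum[OF this]
  have "interval_lebesgue_integral lborel (ereal 0) (ereal x) w + interval_lebesgue_integral lborel (ereal x) (ereal y) w
     = interval_lebesgue_integral lborel (ereal 0) (ereal y) w" .
  then have "v y - v x = interval_lebesgue_integral lborel (ereal x) (ereal y) w"
    using vv[of x] vv[of y] by simp
  also have "\<dots> = (LINT t|lborel. indicat_real {x..y} t * w t)"
    using xy by (simp add: interval_integral_Icc set_lebesgue_integral_def)
  finally show ?thesis .
qed


lemma young_limit:
  fixes A J :: real
  assumes J: "J \<ge> 0" and h: "\<And>e. e > 0 \<Longrightarrow> A \<le> e/2 + J/(2*e)"
  shows "A \<le> sqrt J"
proof (cases "J > 0")
  case True
  have "A \<le> sqrt J/2 + J/(2* sqrt J)" using h[of "sqrt J"] True by simp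
  also have "J/(2* sqrt J) = sqrt J / 2"
    using True by (metis real_div_sqrt times_divide_eq_right divide_divide_eq_left mult.commute less_eq_real_def)
  finally show ?thesis by simp
next
  case False
  then have J0: "J = 0" using J by simp
  show ?thesis
  proof (rule ccontr)
    assume "\<not> A \<le> sqrt J"
    then have "A > 0" using J0 by simp
    then show False using h[of A] J0 by simp
  qed
qed

lemma v_osc:
  fixes u v w :: "real \<Rightarrow> real"
  assumes H: "H2_triple u v w" and xy: "x \<le> y" "y - x \<le> 1"
  shows "\<bar>v y - v x\<bar> \<le> sqrt (LINT t|lborel. (w t)\<^sup>2)"
proof (rule young_limit)
  have wm: "w \<in> borel_measurable lborel" and wi: "integrable lborel (\<lambda>x. (w x)\<^sup>2)"
    using H unfolding H2_triple_def by blast+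
  show "0 \<le> (LINT t|lborel. (w t)\<^sup>2)" by simp
  fix e :: real assume e: "e > 0"
  have ii: "integrable lborel (\<lambda>t. indicat_real {x..y} t * w t)"
    using w_local[OF wm wi, of x y] unfolding set_integrable_def by simp
  have ib: "integrable lborel (\<lambda>t. indicat_real {x..y} t * (e/2) + (w t)\<^sup>2 / (2*e))"
    by (intro Bochner_Integration.integrable_add integrable_divide wi integrable_mult_left)
       (simp add: integrable_indicator_iff emeasure_lborel_Icc_eq)
  have "\<bar>v y - v x\<bar> = norm (LINT t|lborel. indicat_real {x..y} t * w t)"
    using v_diff[OF H xy(1)] by simp
  also have "\<dots> \<le> (LINT t|lborel. norm (indicat_real {x..y} t * w t))"
    by (rule integral_norm_bound)
  also have "\<dots> \<le> (LINT t|lborel. indicat_real {x..y} t * (e/2) + (w t)\<^sup>2 / (2*e))"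
  proof (rule integral_mono[OF _ ib])
    show "integrable lborel (\<lambda>t. norm (indicat_real {x..y} t * w t))"
      using ii by (rule integrable_norm)
    fix t
    have "2*e*\<bar>w t\<bar> \<le> e\<^sup>2 + (w t)\<^sup>2"
    proof -
      have "0 \<le> (e - \<bar>w t\<bar>)\<^sup>2" by simp
      then show ?thesis unfolding power2_diff power2_abs by simp
    qed
    then have "\<bar>w t\<bar> \<le> e/2 + (w t)\<^sup>2 / (2*e)"
      using e by (simp add: field_simps power2_eq_square)
    then show "norm (indicat_real {x..y} t * w t) \<le> indicat_real {x..y} t * (e/2) + (w t)\<^sup>2 / (2*e)"
      using e by (auto simp: indicator_def)
  qed
  also have "\<dots> = (y - x) * (e/2) + (LINT t|lborel. (w t)\<^sup>2) / (2*e)"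
    using xy(1)
    by (subst Bochner_Integration.integral_add)
       (auto simp: integrable_indicator_iff emeasure_lborel_Icc_eq intro!: integrable_divide wi)
  also have "\<dots> \<le> e/2 + (LINT t|lborel. (w t)\<^sup>2) / (2*e)"
    using xy e by simp
  finally show "\<bar>v y - v x\<bar> \<le> e/2 + (LINT t|lborel. (w t)\<^sup>2) / (2*e)" .
qed


lemma taylor1:
  fixes u v w :: "real \<Rightarrow> real"
  assumes H: "H2_triple u v w" and t: "0 \<le> t" "t \<le> 1"
  shows "\<bar>u (x+t) - u x - t * v x\<bar> \<le> t * sqrt (LINT t|lborel. (w t)\<^sup>2)"
proof (cases "t = 0")
  case True then show ?thesis by simp
next
  case False
  then have tp: "t > 0" using t by simp
  have du: "\<And>z. DERIV u z :> v z" using H unfolding H2_triple_def by blast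
  obtain z where z: "x < z" "z < x + t" "u (x+t) - u x = (x + t - x) * v z"
    using MVT2[of x "x+t" u v] tp du by auto
  have "\<bar>v z - v x\<bar> \<le> sqrt (LINT t|lborel. (w t)\<^sup>2)"
    by (rule v_osc[OF H]) (use z t in auto)
  moreover have "u (x+t) - u x - t * v x = t * (v z - v x)"
    using z(3) by (simp add: algebra_simps)
  ultimately show ?thesis using tp by (simp add: abs_mult)
qed

lemma sq3:
  fixes A a b c :: real
  assumes "\<bar>A\<bar> \<le> a + b + c" "0 \<le> a" "0 \<le> b" "0 \<le> c"
  shows "A\<^sup>2 \<le> 3 * (a\<^sup>2 + b\<^sup>2 + c\<^sup>2)"
proof -
  have "A\<^sup>2 \<le> (a+b+c)\<^sup>2"
    using assms by (metis abs_ge_zero power2_abs power_mono)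
  also have "\<dots> \<le> 3 * (a\<^sup>2 + b\<^sup>2 + c\<^sup>2)"
    using sum_squares_ge_zero[of "a-b" "b-c"]
    by (smt (verit) power2_diff power2_sum zero_le_power2 mult_2)
  finally show ?thesis .
qed

lemma comb:
  fixes A B P Q h S :: real
  shows "\<bar>P - A - h*B\<bar> \<le> h*S \<Longrightarrow> \<bar>Q - A - 2*h*B\<bar> \<le> 2*h*S \<Longrightarrow> 2*h*S \<le> S \<Longrightarrow> \<bar>A\<bar> \<le> 2*\<bar>P\<bar> + \<bar>Q\<bar> + 2*S"
  by (simp add: abs_le_iff) linarith

lemma point_bound:
  fixes u v w :: "real \<Rightarrow> real"
  assumes H: "H2_triple u v w" and t: "0 \<le> t" "t \<le> 1"
  shows "(u x)\<^sup>2 \<le> 12 * (u (x + 1/2 * t))\<^sup>2 + 3 * (u (x + t))\<^sup>2 + 12 * (LINT t|lborel. (w t)\<^sup>2)"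
proof -
  let ?J = "LINT t|lborel. (w t)\<^sup>2"
  have J: "?J \<ge> 0" by simp
  have r1: "\<bar>u (x+t/2) - u x - (t/2) * v x\<bar> \<le> (t/2) * sqrt ?J"
    by (rule taylor1[OF H]) (use t in auto)
  have r2: "\<bar>u (x+t) - u x - t * v x\<bar> \<le> t * sqrt ?J"
    by (rule taylor1[OF H t])
  have sJ: "t * sqrt ?J \<le> sqrt ?J" using t by (simp add: mult_left_le_one_le)
  have "\<bar>u x\<bar> \<le> 2 * \<bar>u (x + 1/2 * t)\<bar> + \<bar>u (x + t)\<bar> + 2 * sqrt ?J"
    using comb[of "u (x + 1/2 * t)" "u x" "t/2" "v x" "sqrt ?J" "u (x+t)"] r1 r2 sJ by simp
  from sq3[OF this] have "(u x)\<^sup>2 \<le> 3 * ((2 * \<bar>u (x + 1/2 * t)\<bar>)\<^sup>2 + \<bar>u (x + t)\<bar>\<^sup>2 + (2 * sqrt ?J)\<^sup>2)"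
    by simp
  also have "\<dots> = 12 * (u (x + 1/2 * t))\<^sup>2 + 3 * (u (x + t))\<^sup>2 + 12 * ?J"
    using J by (simp add: power_mult_distrib)
  finally show ?thesis .
qed

lemma sup_bound:
  fixes u v w :: "real \<Rightarrow> real"
  assumes H: "H2_triple u v w"
  shows "(u x)\<^sup>2 \<le> 27 * ((LINT t|lborel. (w t)\<^sup>2) + (LINT t|lborel. (u t)\<^sup>2))"
proof -
  let ?J = "LINT t|lborel. (w t)\<^sup>2" and ?U = "LINT t|lborel. (u t)\<^sup>2"
  have ui: "integrable lborel (\<lambda>t. (u t)\<^sup>2)" using H unfolding H2_triple_def by blast
  have i1: "integrable lborel (\<lambda>t. (u (x + 1/2 * t))\<^sup>2)"
    using lborel_integrable_real_affine[OF ui, of "1/2" x] by simp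
  have i2: "integrable lborel (\<lambda>t. (u (x + 1 * t))\<^sup>2)"
    using lborel_integrable_real_affine[OF ui, of 1 x] by simp
  have e1: "(LINT t|lborel. (u (x + t/2))\<^sup>2) = 2 * ?U"
    using lborel_integral_real_affine[of "1/2" "\<lambda>t. (u t)\<^sup>2" x] by simp
  have e2: "(LINT t|lborel. (u (x + t))\<^sup>2) = ?U"
    using lborel_integral_real_affine[of "1" "\<lambda>t. (u t)\<^sup>2" x] by simp
  have ind: "integrable lborel (indicat_real {0..1::real})"
    using emeasure_lborel_Icc_eq[of 0 1] by (simp add: integrable_indicator_iff)
  have "(u x)\<^sup>2 = (LINT t|lborel. indicat_real {0..1::real} t * (u x)\<^sup>2)"
    by (simp add: content_real)
  also have "\<dots> \<le> (LINT t|lborel. 12 * (u (x + 1/2 * t))\<^sup>2 + 3 * (u (x + 1 * t))\<^sup>2 + indicat_real {0..1::real} t * (12 * ?J))"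
  proof (rule integral_mono)
    show "integrable lborel (\<lambda>t. indicat_real {0..1::real} t * (u x)\<^sup>2)"
      using ind by simp
    show "integrable lborel (\<lambda>t. 12 * (u (x + 1/2 * t))\<^sup>2 + 3 * (u (x + 1 * t))\<^sup>2 + indicat_real {0..1::real} t * (12 * ?J))"
      by (intro Bochner_Integration.integrable_add integrable_mult_right integrable_mult_left i1 i2 ind)
    fix t
    show "indicat_real {0..1::real} t * (u x)\<^sup>2 \<le> 12 * (u (x + 1/2 * t))\<^sup>2 + 3 * (u (x + 1 * t))\<^sup>2 + indicat_real {0..1::real} t * (12 * ?J)"
    proof (cases "t \<in> {0..1}")
      case True
      then show ?thesis using point_bound[OF H, of t x] by simp
    next
      case False
      then show ?thesis by simp
    qed
  qed
  also have "\<dots> = 12 * (2 * ?U) + 3 * ?U + 12 * ?J"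
    using i1 i2 ind
    by (simp add: Bochner_Integration.integral_add integrable_mult_left e1 e2)
  also have "\<dots> \<le> 27 * (?J + ?U)"
    by simp
  finally show ?thesis .
qed


lemma prim_le:
  assumes fc: "continuous_on UNIV f" and h: "homogeneous_of_degree p f"
  shows "prim f s \<le> max (prim f 1) (prim f (-1)) * \<bar>s\<bar> powr (p+1)"
proof (cases "s = 0")
  case True then show ?thesis by simp
next
  case False
  show ?thesis
  proof (cases "s > 0")
    case True
    have "prim f s = prim f (s * 1)" by simp
    also have "\<dots> = s powr (p+1) * prim f 1" by (rule prim_homog[OF fc h True])
    finally show ?thesis using True by (simp add: mult.commute mult_right_mono)
  next
    case False
    then have sn: "-s > 0" using \<open>s \<noteq> 0\<close> by simp
    have "prim f s = prim f ((-s) * (-1))" by simp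
    also have "\<dots> = (-s) powr (p+1) * prim f (-1)" by (rule prim_homog[OF fc h sn])
    finally show ?thesis using sn by (simp add: mult.commute mult_right_mono)
  qed
qed

lemma M_pos:
  assumes fc: "continuous_on UNIV f" and h: "homogeneous_of_degree p f" and ex: "\<exists>s. prim f s > 0"
  shows "max (prim f 1) (prim f (-1)) > 0"
proof -
  obtain s where s: "prim f s > 0" using ex by blast
  have "prim f s \<le> max (prim f 1) (prim f (-1)) * \<bar>s\<bar> powr (p+1)" by (rule prim_le[OF fc h])
  with s show ?thesis by (smt (verit) mult_nonpos_nonneg powr_ge_zero)
qed

lemma I_eq:
  fixes u v w :: "real \<Rightarrow> real"
  assumes H: "H2_triple u v w"
  shows "I_fun 0 c u v w = (LINT t|lborel. (w t)\<^sup>2) + (1 - c\<^sup>2) * (LINT t|lborel. (u t)\<^sup>2)"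
proof -
  have ui: "integrable lborel (\<lambda>t. (u t)\<^sup>2)" and wi: "integrable lborel (\<lambda>t. (w t)\<^sup>2)"
    using H unfolding H2_triple_def by blast+
  show ?thesis unfolding I_fun_def using ui wi by simp
qed

lemma pow_bound:
  fixes y B p :: real
  assumes "y\<^sup>2 \<le> B" "p > 1"
  shows "\<bar>y\<bar> powr (p+1) \<le> B powr ((p-1)/2) * y\<^sup>2"
proof (cases "y = 0")
  case True then show ?thesis by simp
next
  case False
  then have ay: "\<bar>y\<bar> > 0" by simp
  have "\<bar>y\<bar> powr (p+1) = \<bar>y\<bar> powr ((p-1) + 2)" by (simp add: algebra_simps)
  also have "\<dots> = \<bar>y\<bar> powr (p-1) * \<bar>y\<bar> powr 2"
    by (rule powr_add)
  also have "\<bar>y\<bar> powr 2 = y\<^sup>2" using ay by (simp add: powr_numeral)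
  also have "\<bar>y\<bar> powr (p-1) = (y\<^sup>2) powr ((p-1)/2)"
  proof -
    have y2: "\<bar>y\<bar> powr 2 = y\<^sup>2" using ay by (simp add: powr_numeral)
    have "(\<bar>y\<bar> powr 2) powr ((p-1)/2) = \<bar>y\<bar> powr (2 * ((p-1)/2))" by (rule powr_powr)
    also have "2 * ((p-1)/2) = p - 1" by simp
    finally show ?thesis unfolding y2 by simp
  qed
  also have "(y\<^sup>2) powr ((p-1)/2) \<le> B powr ((p-1)/2)"
    using assms by (intro powr_mono2) auto
  finally show ?thesis by (simp add: mult_right_mono)
qed

lemma ratio_lower:
  fixes u v w :: "real \<Rightarrow> real"
  assumes fc: "continuous_on UNIV f" and h: "homogeneous_of_degree p f" and ex: "\<exists>s. prim f s > 0"
    and p: "p > 1" and H: "H2_triple u v w" and K: "K_fun p f u > 0"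
  shows "I_fun 0 0 u v w / (K_fun p f u) powr (2/(p+1))
           \<ge> 1 / ((p+1) * max (prim f 1) (prim f (-1)) * 27 powr ((p-1)/2)) powr (2/(p+1))"
proof -
  define M where "M = max (prim f 1) (prim f (-1))"
  define C where "C = (p+1) * M * 27 powr ((p-1)/2)"
  define I where "I = I_fun 0 0 u v w"
  let ?J = "LINT t|lborel. (w t)\<^sup>2" and ?U = "LINT t|lborel. (u t)\<^sup>2"
  have Mp: "M > 0" unfolding M_def by (rule M_pos[OF fc h ex])
  have Cp: "C > 0" unfolding C_def using Mp p by simp
  have ui: "integrable lborel (\<lambda>t. (u t)\<^sup>2)" using H unfolding H2_triple_def by blast
  have Ieq: "I = ?J + ?U" unfolding I_def using I_eq[OF H, of 0] by simp
  have J0: "?J \<ge> 0" and U0: "?U \<ge> 0" by simp_all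
  have sb: "\<And>x. (u x)\<^sup>2 \<le> 27 * I" using sup_bound[OF H] Ieq by simp
  have I0: "I \<ge> 0" using J0 U0 Ieq by simp
  have int: "integrable lborel (\<lambda>x. prim f (u x))"
  proof (rule ccontr)
    assume "\<not> ?thesis"
    then have "(LINT x|lborel. prim f (u x)) = 0" by (rule not_integrable_integral_eq)
    then show False using K unfolding K_fun_def by simp
  qed
  have "(LINT x|lborel. prim f (u x)) \<le> (LINT x|lborel. M * (27 * I) powr ((p-1)/2) * (u x)\<^sup>2)"
  proof (rule integral_mono[OF int])
    show "integrable lborel (\<lambda>x. M * (27 * I) powr ((p - 1) / 2) * (u x)\<^sup>2)"
      using ui by simp
    fix x
    have "prim f (u x) \<le> M * \<bar>u x\<bar> powr (p+1)" unfolding M_def by (rule prim_le[OF fc h])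
    also have "\<dots> \<le> M * ((27 * I) powr ((p-1)/2) * (u x)\<^sup>2)"
      using pow_bound[OF sb p] Mp by (intro mult_left_mono) auto
    finally show "prim f (u x) \<le> M * (27 * I) powr ((p-1)/2) * (u x)\<^sup>2" by simp
  qed
  also have "\<dots> = M * (27 * I) powr ((p-1)/2) * ?U" by simp
  also have "\<dots> \<le> M * (27 * I) powr ((p-1)/2) * I"
    using Mp Ieq J0 by (intro mult_left_mono) auto
  finally have "K_fun p f u \<le> (p+1) * (M * (27 * I) powr ((p-1)/2) * I)"
    unfolding K_fun_def using p by (intro mult_left_mono) auto
  also have "\<dots> = C * I powr ((p+1)/2)"
  proof -
    have "I powr ((p+1)/2) = I powr ((p-1)/2) * I"
    proof (cases "I = 0")
      case True then show ?thesis by simp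
    next
      case False
      then have "I > 0" using I0 by simp
      have "I powr ((p+1)/2) = I powr ((p-1)/2 + 1)" by (simp add: field_simps)
      also have "\<dots> = I powr ((p-1)/2) * I powr 1" by (rule powr_add)
      finally show ?thesis using \<open>I > 0\<close> by simp
    qed
    then show ?thesis unfolding C_def using I0 by (simp add: powr_mult)
  qed
  finally have KC: "K_fun p f u \<le> C * I powr ((p+1)/2)" .
  have Ip: "I > 0"
  proof (rule ccontr)
    assume "\<not> I > 0" then have "I = 0" using I0 by simp
    then show False using KC K by simp
  qed
  have "K_fun p f u powr (2/(p+1)) \<le> (C * I powr ((p+1)/2)) powr (2/(p+1))"
    using KC K p by (intro powr_mono2) auto
  also have "\<dots> = C powr (2/(p+1)) * I"
  proof -
    have e: "(p * 2 + 2) / (2 * p + 2) = (1::real)" using p by (simp add: field_simps)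
    show ?thesis using Cp Ip p by (simp add: powr_mult powr_powr e)
  qed
  finally have Kq: "K_fun p f u powr (2/(p+1)) \<le> C powr (2/(p+1)) * I" .
  have Kqp: "K_fun p f u powr (2/(p+1)) > 0" using K by simp
  have "1 / C powr (2/(p+1)) = I / (C powr (2/(p+1)) * I)" using Ip by simp
  also have "\<dots> \<le> I / K_fun p f u powr (2/(p+1))"
    using Kq Kqp Ip Cp by (intro divide_left_mono) auto
  finally show ?thesis unfolding I_def C_def M_def .
qed


lemma int_scale:
  fixes g :: "real \<Rightarrow> real" and s :: real
  assumes s: "s > 0"
  shows "(LINT x|lborel. g (s * x)) = (LINT x|lborel. g x) / s"
  using lborel_integral_real_affine[of s g 0] s by simp

lemma int_scale_integrable:
  fixes g :: "real \<Rightarrow> real" and s :: real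
  assumes s: "s > 0" and "integrable lborel g"
  shows "integrable lborel (\<lambda>x. g (s * x))"
  using lborel_integrable_real_affine[OF assms(2), of s 0] s by simp

lemma Icc_scale:
  fixes g :: "real \<Rightarrow> real" and s a b :: real
  assumes s: "s > 0" and ab: "a \<le> b"
  shows "interval_lebesgue_integral lborel (ereal (s*a)) (ereal (s*b)) g
       = s * interval_lebesgue_integral lborel (ereal a) (ereal b) (\<lambda>t. g (s * t))"
proof -
  have sab: "s*a \<le> s*b" using s ab by simp
  have "interval_lebesgue_integral lborel (ereal (s*a)) (ereal (s*b)) g = (LINT t|lborel. indicat_real {s*a..s*b} t * g t)"
    using sab by (simp add: interval_integral_Icc set_lebesgue_integral_def)
  also have "\<dots> = s * (LINT t|lborel. indicat_real {s*a..s*b} (s*t) * g (s*t))"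
    using lborel_integral_real_affine[of s "\<lambda>t. indicat_real {s*a..s*b} t * g t" 0] s by simp
  also have "(\<lambda>t. indicat_real {s*a..s*b} (s*t) * g (s*t)) = (\<lambda>t. indicat_real {a..b} t * g (s*t))"
  proof (rule ext)
    fix t
    have "s*t \<in> {s*a..s*b} \<longleftrightarrow> t \<in> {a..b}" using s by auto
    then show "indicat_real {s*a..s*b} (s*t) * g (s*t) = indicat_real {a..b} t * g (s*t)"
      by (simp add: indicator_def)
  qed
  also have "(LINT t|lborel. indicat_real {a..b} t * g (s*t)) = interval_lebesgue_integral lborel (ereal a) (ereal b) (\<lambda>t. g (s * t))"
    using ab by (simp add: interval_integral_Icc set_lebesgue_integral_def)
  finally show ?thesis .
qed

lemma zero_scale:
  fixes g :: "real \<Rightarrow> real" and s x :: real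
  assumes s: "s > 0"
  shows "interval_lebesgue_integral lborel (ereal 0) (ereal (s*x)) g
       = s * interval_lebesgue_integral lborel (ereal 0) (ereal x) (\<lambda>t. g (s * t))"
proof (cases "0 \<le> x")
  case True
  then show ?thesis using Icc_scale[OF s True, of g] by simp
next
  case False
  then have x0: "x \<le> 0" by simp
  have "interval_lebesgue_integral lborel (ereal 0) (ereal (s*x)) g = - interval_lebesgue_integral lborel (ereal (s*x)) (ereal (s*0)) g"
    using interval_integral_endpoints_reverse[of "ereal 0" "ereal (s*x)" g] by simp
  also have "\<dots> = - (s * interval_lebesgue_integral lborel (ereal x) (ereal 0) (\<lambda>t. g (s * t)))"
    using Icc_scale[OF s x0, of g] by simp
  also have "\<dots> = s * interval_lebesgue_integral lborel (ereal 0) (ereal x) (\<lambda>t. g (s * t))"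
    using interval_integral_endpoints_reverse[of "ereal 0" "ereal x" "\<lambda>t. g (s * t)"] by simp
  finally show ?thesis .
qed

lemma H2_scale:
  fixes u v w :: "real \<Rightarrow> real" and s :: real
  assumes H: "H2_triple u v w" and s: "s > 0"
  shows "H2_triple (\<lambda>x. u (s*x)) (\<lambda>x. s * v (s*x)) (\<lambda>x. s\<^sup>2 * w (s*x))"
proof -
  have du: "\<And>x. DERIV u x :> v x" and wm: "w \<in> borel_measurable lborel"
    and vv: "\<And>x. v x = v 0 + interval_lebesgue_integral lborel (ereal 0) (ereal x) w"
    and ui: "integrable lborel (\<lambda>x. (u x)\<^sup>2)" and vi: "integrable lborel (\<lambda>x. (v x)\<^sup>2)"
    and wi: "integrable lborel (\<lambda>x. (w x)\<^sup>2)"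
    using H unfolding H2_triple_def by blast+
  have d: "\<And>x. DERIV (\<lambda>x. u (s*x)) x :> s * v (s*x)"
  proof -
    fix x
    have "DERIV (\<lambda>x. u (s*x)) x :> v (s*x) * s"
      by (rule DERIV_chain2[OF du]) (auto intro!: derivative_eq_intros)
    then show "DERIV (\<lambda>x. u (s*x)) x :> s * v (s*x)" by (simp add: mult.commute)
  qed
  have wb: "w \<in> borel_measurable borel" using wm by simp
  have m1: "(\<lambda>x. w (s*x)) \<in> borel_measurable borel"
    by (rule measurable_compose[OF _ wb]) (intro borel_measurable_continuous_onI continuous_intros)
  have m: "(\<lambda>x. s\<^sup>2 * w (s*x)) \<in> borel_measurable lborel"
    using m1 by simp
  have v': "\<And>x. s * v (s*x) = s * v (s*0) + interval_lebesgue_integral lborel (ereal 0) (ereal x) (\<lambda>x. s\<^sup>2 * w (s*x))"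
  proof -
    fix x
    have "s * v (s*x) = s * v 0 + s * interval_lebesgue_integral lborel (ereal 0) (ereal (s*x)) w"
      using vv[of "s*x"] by (simp add: algebra_simps)
    also have "s * interval_lebesgue_integral lborel (ereal 0) (ereal (s*x)) w
       = interval_lebesgue_integral lborel (ereal 0) (ereal x) (\<lambda>x. s\<^sup>2 * w (s*x))"
      using zero_scale[OF s, where g=w and x=x] by (simp add: power2_eq_square)
    finally show "s * v (s*x) = s * v (s*0) + interval_lebesgue_integral lborel (ereal 0) (ereal x) (\<lambda>x. s\<^sup>2 * w (s*x))"
      by simp
  qed
  have i1: "integrable lborel (\<lambda>x. (u (s*x))\<^sup>2)"
    using int_scale_integrable[OF s ui] by simp
  have i2: "integrable lborel (\<lambda>x. (s * v (s*x))\<^sup>2)"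
    using int_scale_integrable[OF s vi] by (simp add: power_mult_distrib)
  have i3: "integrable lborel (\<lambda>x. (s\<^sup>2 * w (s*x))\<^sup>2)"
    using int_scale_integrable[OF s wi] by (simp add: power_mult_distrib)
  show ?thesis unfolding H2_triple_def
    apply (intro conjI allI)
         apply (rule d)
        apply (rule m)
       apply (rule v')
      apply (rule i1)
     apply (rule i2)
    apply (rule i3)
    done
qed


lemma K_scale:
  assumes s: "s > 0"
  shows "K_fun p f (\<lambda>x. u (s*x)) = K_fun p f u / s"
  unfolding K_fun_def using int_scale[OF s, of "\<lambda>y. prim f (u y)"] by simp

lemma ratio_scaled:
  fixes u v w :: "real \<Rightarrow> real" and s :: real
  assumes H: "H2_triple u v w" and s: "s > 0" and K: "K_fun p f u > 0"
  shows "I_fun 0 c (\<lambda>x. u (s*x)) (\<lambda>x. s * v (s*x)) (\<lambda>x. s\<^sup>2 * w (s*x)) / K_fun p f (\<lambda>x. u (s*x)) powr q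
     = s powr (q-1) * (s^4 * (LINT t|lborel. (w t)\<^sup>2) + (1-c\<^sup>2) * (LINT t|lborel. (u t)\<^sup>2)) / K_fun p f u powr q"
proof -
  let ?J = "LINT t|lborel. (w t)\<^sup>2" and ?U = "LINT t|lborel. (u t)\<^sup>2"
  have Hs: "H2_triple (\<lambda>x. u (s*x)) (\<lambda>x. s * v (s*x)) (\<lambda>x. s\<^sup>2 * w (s*x))"
    by (rule H2_scale[OF H s])
  have e1: "(LINT t|lborel. (s\<^sup>2 * w (s*t))\<^sup>2) = s^4 * ?J / s"
  proof -
    have "(LINT t|lborel. (s\<^sup>2 * w (s*t))\<^sup>2) = (LINT t|lborel. s^4 * (w (s*t))\<^sup>2)"
      by (simp add: power_mult_distrib power2_eq_square[of "s\<^sup>2"] power4_eq_xxxx)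
    also have "\<dots> = s^4 * (LINT t|lborel. (w (s*t))\<^sup>2)" by simp
    also have "(LINT t|lborel. (w (s*t))\<^sup>2) = ?J / s" by (rule int_scale[OF s])
    finally show ?thesis by simp
  qed
  have e2: "(LINT t|lborel. (u (s*t))\<^sup>2) = ?U / s" by (rule int_scale[OF s])
  have I: "I_fun 0 c (\<lambda>x. u (s*x)) (\<lambda>x. s * v (s*x)) (\<lambda>x. s\<^sup>2 * w (s*x)) = (s^4 * ?J + (1-c\<^sup>2) * ?U) / s"
    using I_eq[OF Hs, of c] e1 e2 by (simp add: add_divide_distrib)
  have Kq: "K_fun p f (\<lambda>x. u (s*x)) powr q = K_fun p f u powr q / s powr q"
    using K_scale[OF s, of p f u] K s by (simp add: powr_divide)
  have sq: "s powr q / s = s powr (q-1)" using s by (simp add: powr_diff)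
  show ?thesis unfolding I Kq using s K
    by (simp add: sq[symmetric] field_simps)
qed

lemma solve_lin:
  fixes X P A R :: real
  shows "X = P / A * R \<Longrightarrow> A > 0 \<Longrightarrow> P > 0 \<Longrightarrow> R = A / P * X"
  by (simp add: field_simps)

definition Sset :: "real \<Rightarrow> (real \<Rightarrow> real) \<Rightarrow> real \<Rightarrow> real set" where
  "Sset p f c = {I_fun 0 c u v w / (K_fun p f u) powr (2 / (p + 1)) | u v w.
       H2_triple u v w \<and> K_fun p f u > 0}"

lemma m_Sset: "m_fun p f 0 c = Inf (Sset p f c)"
  unfolding m_fun_def Sset_def ..

lemma Sset_scale:
  assumes c: "c\<^sup>2 < 1"
  shows "Sset p f c = (\<lambda>r. (1 - c\<^sup>2) powr ((3 + 2/(p+1))/4) * r) ` Sset p f 0"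
proof -
  define a where "a = 1 - c\<^sup>2"
  define q where "q = 2/(p+1)"
  have a: "a > 0" using c unfolding a_def by simp
  have ag: "a powr ((q-1)/4) * a = a powr ((3+q)/4)"
  proof -
    have "a powr ((3+q)/4) = a powr ((q-1)/4 + 1)"
      by (rule arg_cong[where f="\<lambda>e. a powr e"]) (simp add: field_simps)
    also have "\<dots> = a powr ((q-1)/4) * a powr 1" by (rule powr_add)
    finally show ?thesis using a by simp
  qed
  show ?thesis unfolding a_def[symmetric] q_def[symmetric]
  proof
    show "Sset p f c \<subseteq> (\<lambda>r. a powr ((3+q)/4) * r) ` Sset p f 0"
    proof
      fix r assume "r \<in> Sset p f c"
      then obtain u v w where H: "H2_triple u v w" and K: "K_fun p f u > 0"
        and r: "r = I_fun 0 c u v w / (K_fun p f u) powr q"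
        unfolding Sset_def q_def by blast
      define s where "s = a powr (-1/4)"
      have s: "s > 0" using a unfolding s_def by simp
      have s4: "s^4 = 1/a"
      proof -
        have "s^4 = s powr 4" using s by (simp add: powr_realpow)
        also have "\<dots> = a powr (-1)" unfolding s_def using a by (simp add: powr_powr)
        finally show ?thesis using a by (simp add: powr_minus_divide)
      qed
      have sq: "s powr (q-1) = a powr ((1-q)/4)" unfolding s_def powr_powr
        by (rule arg_cong[where f="\<lambda>e. a powr e"]) (simp add: field_simps)
      let ?r0 = "I_fun 0 0 (\<lambda>x. u (s*x)) (\<lambda>x. s * v (s*x)) (\<lambda>x. s\<^sup>2 * w (s*x)) / K_fun p f (\<lambda>x. u (s*x)) powr q"
      have r0: "?r0 \<in> Sset p f 0"
      proof -
        have Ks: "K_fun p f (\<lambda>x. u (s*x)) > 0" using K_scale[OF s, of p f u] K s by simp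
        show ?thesis unfolding Sset_def q_def using H2_scale[OF H s] Ks by blast
      qed
      have "?r0 = s powr (q-1) * (s^4 * (LINT t|lborel. (w t)\<^sup>2) + (LINT t|lborel. (u t)\<^sup>2)) / K_fun p f u powr q"
        using ratio_scaled[OF H s K, of 0 q] by simp
      also have "\<dots> = s powr (q-1) / a * r"
        unfolding r I_eq[OF H] s4 a_def[symmetric] using a by (simp add: field_simps)
      finally have eq: "?r0 = s powr (q-1) / a * r" .
      have "r = a / s powr (q-1) * ?r0" by (rule solve_lin[OF eq a]) (use s in simp)
      also have "a / s powr (q-1) = a powr ((3+q)/4)"
      proof -
        have XY: "a powr ((1-q)/4) * a powr ((q-1)/4) = 1"
        proof -
          have "a powr ((1-q)/4) * a powr ((q-1)/4) = a powr ((1-q)/4 + (q-1)/4)" by (rule powr_add[symmetric])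
          also have "(1-q)/4 + (q-1)/4 = 0" by (simp add: field_simps)
          finally show ?thesis using a by simp
        qed
        have Xp: "a powr ((1-q)/4) > 0" using a by simp
        have "a / a powr ((1-q)/4) = a * a powr ((q-1)/4)"
          using Xp XY by (simp add: divide_eq_eq mult.assoc[symmetric] mult.commute[of _ "a powr ((1-q)/4)"] mult.left_commute)
        then show ?thesis unfolding sq using ag by (simp add: mult.commute)
      qed
      finally show "r \<in> (\<lambda>r. a powr ((3+q)/4) * r) ` Sset p f 0" using r0 by blast
    qed
  next
    show "(\<lambda>r. a powr ((3+q)/4) * r) ` Sset p f 0 \<subseteq> Sset p f c"
    proof
      fix r' assume "r' \<in> (\<lambda>r. a powr ((3+q)/4) * r) ` Sset p f 0"
      then obtain r where r': "r' = a powr ((3+q)/4) * r" and "r \<in> Sset p f 0" by blast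
      then obtain u v w where H: "H2_triple u v w" and K: "K_fun p f u > 0"
        and r: "r = I_fun 0 0 u v w / (K_fun p f u) powr q"
        unfolding Sset_def q_def by blast
      define s where "s = a powr (1/4)"
      have s: "s > 0" using a unfolding s_def by simp
      have s4: "s^4 = a"
      proof -
        have "s^4 = s powr 4" using s by (simp add: powr_realpow)
        also have "\<dots> = a" unfolding s_def using a by (simp add: powr_powr)
        finally show ?thesis .
      qed
      have sq: "s powr (q-1) = a powr ((q-1)/4)" unfolding s_def powr_powr
        by (rule arg_cong[where f="\<lambda>e. a powr e"]) (simp add: field_simps)
      let ?r1 = "I_fun 0 c (\<lambda>x. u (s*x)) (\<lambda>x. s * v (s*x)) (\<lambda>x. s\<^sup>2 * w (s*x)) / K_fun p f (\<lambda>x. u (s*x)) powr q"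
      have r1: "?r1 \<in> Sset p f c"
      proof -
        have Ks: "K_fun p f (\<lambda>x. u (s*x)) > 0" using K_scale[OF s, of p f u] K s by simp
        show ?thesis unfolding Sset_def q_def using H2_scale[OF H s] Ks by blast
      qed
      have "?r1 = s powr (q-1) * (s^4 * (LINT t|lborel. (w t)\<^sup>2) + a * (LINT t|lborel. (u t)\<^sup>2)) / K_fun p f u powr q"
        using ratio_scaled[OF H s K, of c q] unfolding a_def by simp
      also have "\<dots> = s powr (q-1) * a * r"
        unfolding r I_eq[OF H] s4 by (simp add: field_simps)
      also have "\<dots> = r'" unfolding r' sq ag ..
      finally show "r' \<in> Sset p f c" using r1 by simp
    qed
  qed
qed


lemma gauss_eq:
  fixes b :: real
  assumes "b > 0"
  shows "exp (- b * x\<^sup>2) = sqrt (pi / b) * normal_density 0 (1 / sqrt (2*b)) x"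
proof -
  have "(1 / sqrt (2*b))\<^sup>2 = 1/(2*b)" using assms by (simp add: power_divide)
  then show ?thesis using assms unfolding normal_density_def
    by (simp add: real_sqrt_divide field_simps)
qed

lemma gauss_integrable_moment:
  fixes b :: real
  assumes "b > 0"
  shows "integrable lborel (\<lambda>x. exp (- b * x\<^sup>2) * x ^ k)"
proof -
  have im: "integrable lborel (\<lambda>x. normal_density 0 (1 / sqrt (2*b)) x * (x - 0) ^ k)"
    by (rule integrable_normal_moment) (use assms in simp)
  have "integrable lborel (\<lambda>x. sqrt (pi / b) * (normal_density 0 (1 / sqrt (2*b)) x * (x - 0) ^ k))"
    by (rule integrable_mult_right) (rule im)
  then show ?thesis using gauss_eq[OF assms] by (simp add: mult.assoc)
qed

lemma gauss_integral_pos: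
  fixes b :: real
  assumes "b > 0"
  shows "(LINT x|lborel. exp (- b * x\<^sup>2)) > 0"
proof -
  have "(LINT x|lborel. exp (- b * x\<^sup>2)) = (LINT x|lborel. sqrt (pi / b) * normal_density 0 (1 / sqrt (2*b)) x)"
    using gauss_eq[OF assms] by simp
  also have "\<dots> = sqrt (pi / b) * (LINT x|lborel. normal_density 0 (1 / sqrt (2*b)) x)"
    by (rule integral_mult_right_zero)
  also have "(LINT x|lborel. normal_density 0 (1/sqrt(2*b)) x) = 1"
    by (rule integral_normal_density) (use assms in simp)
  finally show ?thesis using assms by simp
qed

lemma Sset_nonempty:
  assumes fc: "continuous_on UNIV f" and h: "homogeneous_of_degree p f" and ex: "\<exists>s. prim f s > 0"
    and p: "p > 1"
  shows "Sset p f 0 \<noteq> {}"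
proof -
  obtain s0 where s0: "prim f s0 > 0" using ex by blast
  define u where "u x = exp (- x\<^sup>2) * s0" for x
  define v where "v x = -2 * x * exp (- x\<^sup>2) * s0" for x
  define w where "w x = (4 * x\<^sup>2 - 2) * exp (- x\<^sup>2) * s0" for x
  have du: "DERIV u x :> v x" for x
    unfolding u_def v_def by (auto intro!: derivative_eq_intros simp: algebra_simps)
  have dv: "DERIV v x :> w x" for x
    unfolding v_def w_def by (auto intro!: derivative_eq_intros simp: algebra_simps power2_eq_square)
  have wc: "continuous_on UNIV w" unfolding w_def by (intro continuous_intros)
  have wm: "w \<in> borel_measurable lborel"
    using borel_measurable_continuous_onI[OF wc] by simp
  have vv: "v x = v 0 + interval_lebesgue_integral lborel (ereal 0) (ereal x) w" for x
  proof -
    have "interval_lebesgue_integral lborel (ereal 0) (ereal x) w = v x - v 0"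
      by (rule interval_integral_FTC_finite)
         (auto intro!: continuous_on_subset[OF wc] has_field_derivative_at_within[OF dv]
               simp: has_real_derivative_iff_has_vector_derivative[symmetric])
    then show ?thesis by simp
  qed
  have g0: "integrable lborel (\<lambda>x::real. exp (- 2 * x\<^sup>2) * x ^ k)" for k
    by (rule gauss_integrable_moment) simp
  have e2: "exp (- x\<^sup>2) ^ 2 = exp (- 2 * x\<^sup>2)" for x :: real
    by (simp add: exp_double[symmetric] power2_eq_square exp_add[symmetric])
  have ui: "integrable lborel (\<lambda>x. (u x)\<^sup>2)"
  proof -
    have "integrable lborel (\<lambda>x. s0\<^sup>2 * (exp (- 2 * x\<^sup>2) * x ^ 0))" using g0[of 0] by simp
    then show ?thesis unfolding u_def by (simp add: power_mult_distrib e2 mult.commute)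
  qed
  have vi: "integrable lborel (\<lambda>x. (v x)\<^sup>2)"
  proof -
    have "integrable lborel (\<lambda>x. (4 * s0\<^sup>2) * (exp (- 2 * x\<^sup>2) * x ^ 2))" using g0[of 2] by simp
    moreover have "(v x)\<^sup>2 = (4 * s0\<^sup>2) * (exp (- 2 * x\<^sup>2) * x ^ 2)" for x
      unfolding v_def e2[symmetric] by (simp add: power_mult_distrib)
    ultimately show ?thesis by simp
  qed
  have wi: "integrable lborel (\<lambda>x. (w x)\<^sup>2)"
  proof -
    have "integrable lborel (\<lambda>x. (16 * s0\<^sup>2) * (exp (- 2 * x\<^sup>2) * x ^ 4)
        - (16 * s0\<^sup>2) * (exp (- 2 * x\<^sup>2) * x ^ 2) + (4 * s0\<^sup>2) * (exp (- 2 * x\<^sup>2) * x ^ 0))"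
      using g0[of 4] g0[of 2] g0[of 0] by (intro Bochner_Integration.integrable_add Bochner_Integration.integrable_diff integrable_mult_right)
    moreover have "(w x)\<^sup>2 = (16 * s0\<^sup>2) * (exp (- 2 * x\<^sup>2) * x ^ 4)
        - (16 * s0\<^sup>2) * (exp (- 2 * x\<^sup>2) * x ^ 2) + (4 * s0\<^sup>2) * (exp (- 2 * x\<^sup>2) * x ^ 0)" for x
      unfolding w_def e2[symmetric] by (simp add: power2_eq_square algebra_simps eval_nat_numeral)
    ultimately show ?thesis by simp
  qed
  have H: "H2_triple u v w"
    unfolding H2_triple_def using du wm vv ui vi wi by blast
  have pu: "prim f (u x) = prim f s0 * exp (- (p+1) * x\<^sup>2)" for x
  proof -
    have "prim f (u x) = exp (- x\<^sup>2) powr (p+1) * prim f s0"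
      unfolding u_def by (rule prim_homog[OF fc h]) simp
    also have "exp (- x\<^sup>2) powr (p+1) = exp (- (p+1) * x\<^sup>2)"
      by (simp add: powr_def algebra_simps)
    finally show ?thesis by simp
  qed
  have "K_fun p f u = (p+1) * (prim f s0 * (LINT x|lborel. exp (- (p+1) * x\<^sup>2)))"
    unfolding K_fun_def pu by simp
  moreover have "(LINT x|lborel. exp (- (p+1) * x\<^sup>2)) > 0"
    by (rule gauss_integral_pos) (use p in simp)
  ultimately have K: "K_fun p f u > 0" using p s0 by simp
  show ?thesis unfolding Sset_def using H K by blast
qed


lemma Inf_scale:
  fixes S :: "real set" and k :: real
  assumes ne: "S \<noteq> {}" and bd: "bdd_below S" and k: "k > 0"
  shows "Inf ((\<lambda>r. k * r) ` S) = k * Inf S"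
proof (rule antisym)
  have bd2: "bdd_below ((\<lambda>r. k * r) ` S)"
  proof -
    obtain m where "\<forall>x\<in>S. m \<le> x" using bd unfolding bdd_below_def by blast
    then have "\<forall>y\<in>(\<lambda>r. k * r) ` S. k*m \<le> y" using k by auto
    then show ?thesis unfolding bdd_below_def by blast
  qed
  have "Inf ((\<lambda>r. k * r) ` S) / k \<le> Inf S"
  proof (rule cInf_greatest[OF ne])
    fix r assume "r \<in> S"
    then have "Inf ((\<lambda>r. k * r) ` S) \<le> k * r" by (intro cInf_lower bd2) auto
    then show "Inf ((\<lambda>r. k * r) ` S) / k \<le> r" using k by (simp add: divide_le_eq mult.commute)
  qed
  then show "Inf ((\<lambda>r. k * r) ` S) \<le> k * Inf S" using k by (simp add: divide_le_eq mult.commute)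
  show "k * Inf S \<le> Inf ((\<lambda>r. k * r) ` S)"
  proof (rule cInf_greatest)
    show "(\<lambda>r. k * r) ` S \<noteq> {}" using ne by simp
    fix y assume "y \<in> (\<lambda>r. k * r) ` S"
    then obtain r where r: "r \<in> S" "y = k * r" by blast
    have "Inf S \<le> r" by (rule cInf_lower[OF r(1) bd])
    then show "k * Inf S \<le> y" using k r by simp
  qed
qed

lemma second_deriv:
  fixes d :: "real \<Rightarrow> real" and D k c :: real
  assumes dg: "\<And>c. c\<^sup>2 < 1 \<Longrightarrow> d c = D * (1 - c\<^sup>2) powr k" and c: "c\<^sup>2 < 1"
  shows "deriv (deriv d) c = -2 * D * k * (1 - c\<^sup>2) powr (k-2) * (1 - (2*k-1) * c\<^sup>2)"
proof -
  let ?A = "{-1<..<(1::real)}"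
  have A: "y \<in> ?A \<longleftrightarrow> y\<^sup>2 < 1" for y :: real
    using abs_square_less_1[of y] by (auto simp: abs_less_iff)
  have oA: "open ?A" by simp
  define g1 where "g1 y = D * (k * (1 - y\<^sup>2) powr (k-1) * (- 2 * y))" for y
  have d1: "DERIV (\<lambda>y. D * (1 - y\<^sup>2) powr k) y :> g1 y" if "y\<^sup>2 < 1" for y
  proof -
    have "DERIV (\<lambda>y. (1 - y\<^sup>2) powr k) y :> k * (1 - y\<^sup>2) powr (k - of_nat 1) * (- (2 * y))"
      by (rule DERIV_fun_powr) (use that in \<open>auto intro!: derivative_eq_intros\<close>)
    from DERIV_cmult[OF this, of D] show ?thesis unfolding g1_def by simp
  qed
  have dd: "deriv d y = g1 y" if "y\<^sup>2 < 1" for y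
  proof -
    have ev: "eventually (\<lambda>z. d z = D * (1 - z\<^sup>2) powr k) (nhds y)"
    proof -
      have "eventually (\<lambda>z. z \<in> ?A) (nhds y)" using that A oA by (intro eventually_nhds_in_open) auto
      then show ?thesis by eventually_elim (use A dg in auto)
    qed
    have "deriv d y = deriv (\<lambda>z. D * (1 - z\<^sup>2) powr k) y" by (rule deriv_cong_ev[OF ev refl])
    also have "\<dots> = g1 y" by (rule DERIV_imp_deriv[OF d1[OF that]])
    finally show ?thesis .
  qed
  have ev2: "eventually (\<lambda>z. deriv d z = g1 z) (nhds c)"
  proof -
    have "eventually (\<lambda>z. z \<in> ?A) (nhds c)" using c A oA by (intro eventually_nhds_in_open) auto
    then show ?thesis by eventually_elim (use A dd in auto)
  qed
  have "deriv (deriv d) c = deriv g1 c" by (rule deriv_cong_ev[OF ev2 refl])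
  also have "deriv g1 c = -2 * D * k * ((1 - c\<^sup>2) powr (k-1) + c * ((k-1) * (1 - c\<^sup>2) powr (k-2) * (-2*c)))"
  proof (rule DERIV_imp_deriv)
    have p1: "DERIV (\<lambda>y. (1 - y\<^sup>2) powr (k-1)) c :> (k-1) * (1 - c\<^sup>2) powr (k - 1 - of_nat 1) * (- (2 * c))"
      by (rule DERIV_fun_powr) (use c in \<open>auto intro!: derivative_eq_intros\<close>)
    have e: "g1 = (\<lambda>y. -2 * D * k * (y * (1 - y\<^sup>2) powr (k-1)))"
      unfolding g1_def by (auto simp: fun_eq_iff algebra_simps)
    have dm: "DERIV (\<lambda>y. y * (1 - y\<^sup>2) powr (k-1)) c :> (1 - c\<^sup>2) powr (k-1) + c * ((k-1) * (1 - c\<^sup>2) powr (k-2) * (-2*c))"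
      using DERIV_mult[OF DERIV_ident p1] by (simp add: diff_diff_eq mult.commute)
    then show "DERIV g1 c :> -2 * D * k * ((1 - c\<^sup>2) powr (k-1) + c * ((k-1) * (1 - c\<^sup>2) powr (k-2) * (-2*c)))"
      unfolding e using DERIV_cmult[OF dm, of "-2 * D * k"] by simp
  qed
  also have "\<dots> = -2 * D * k * (1 - c\<^sup>2) powr (k-2) * (1 - (2*k-1) * c\<^sup>2)"
  proof -
    have pos: "1 - c\<^sup>2 > 0" using c by simp
    have "(1 - c\<^sup>2) powr (k-1) = (1 - c\<^sup>2) powr ((k-2) + 1)" by simp
    also have "\<dots> = (1 - c\<^sup>2) powr (k-2) * (1 - c\<^sup>2) powr 1" by (rule powr_add)
    also have "\<dots> = (1 - c\<^sup>2) powr (k-2) * (1 - c\<^sup>2)" using pos by simp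
    finally have e: "(1 - c\<^sup>2) powr (k-1) = (1 - c\<^sup>2) powr (k-2) * (1 - c\<^sup>2)" .
    show ?thesis unfolding e by (simp add: algebra_simps power2_eq_square)
  qed
  finally show ?thesis .
qed


theorem mainTheorem18:
  fixes f :: "real \<Rightarrow> real" and p :: real
  assumes "C2_fun f"
    and "homogeneous_of_degree p f"
    and "\<exists>s. prim f s > 0"
    and "p > 1"
  shows "(\<forall>c. c\<^sup>2 < 1 \<longrightarrow>
            d_fun p f 0 c = (1 - c\<^sup>2) powr ((3 * p + 5) / (4 * (p - 1))) * d_fun p f 0 0)
       \<and> (p \<ge> 9 \<longrightarrow> (\<forall>c. c\<^sup>2 < 1 \<longrightarrow> deriv (deriv (\<lambda>c. d_fun p f 0 c)) c < 0))
       \<and> (p < 9 \<longrightarrow>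
            (\<forall>c. c\<^sup>2 < 2 * (p - 1) / (p + 7) \<longrightarrow> deriv (deriv (\<lambda>c. d_fun p f 0 c)) c < 0) \<and>
            (\<forall>c. 2 * (p - 1) / (p + 7) < c\<^sup>2 \<and> c\<^sup>2 < 1 \<longrightarrow> deriv (deriv (\<lambda>c. d_fun p f 0 c)) c > 0))"
proof -
  have fc: "continuous_on UNIV f" by (rule C2_cont[OF assms(1)])
  note h = assms(2) and ex = assms(3) and p = assms(4)
  define c0 where "c0 = 1 / ((p+1) * max (prim f 1) (prim f (-1)) * 27 powr ((p-1)/2)) powr (2/(p+1))"
  have Mp: "max (prim f 1) (prim f (-1)) > 0" by (rule M_pos[OF fc h ex])
  have c0p: "c0 > 0" unfolding c0_def using Mp p by simp
  define S0 where "S0 = Sset p f 0"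
  have ne: "S0 \<noteq> {}" unfolding S0_def by (rule Sset_nonempty[OF fc h ex p])
  have low: "\<forall>r\<in>S0. c0 \<le> r"
  proof
    fix r assume "r \<in> S0"
    then obtain u v w where H: "H2_triple u v w" and K: "K_fun p f u > 0"
      and r: "r = I_fun 0 0 u v w / (K_fun p f u) powr (2 / (p + 1))"
      unfolding S0_def Sset_def by blast
    show "c0 \<le> r" unfolding r c0_def by (rule ratio_lower[OF fc h ex p H K])
  qed
  have bd: "bdd_below S0" using low unfolding bdd_below_def by blast
  define m0 where "m0 = Inf S0"
  have m0: "m0 \<ge> c0" unfolding m0_def using ne low by (intro cInf_greatest) auto
  have m0p: "m0 > 0" using m0 c0p by simp
  define e where "e = (p + 1) / (p - 1)"
  define k where "k = (3 * p + 5) / (4 * (p - 1))"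
  define D where "D = d_fun p f 0 0"
  have De: "D = (p - 1) / (2 * (p + 1)) * m0 powr e"
    unfolding D_def d_fun_def m_Sset S0_def[symmetric] m0_def e_def ..
  have Dp: "D > 0" unfolding De using p m0p by simp
  have kp: "k > 0" unfolding k_def using p by simp
  have dform: "d_fun p f 0 c = (1 - c\<^sup>2) powr k * D" if c: "c\<^sup>2 < 1" for c
  proof -
    define a where "a = 1 - c\<^sup>2"
    have a: "a > 0" using c unfolding a_def by simp
    have "m_fun p f 0 c = Inf ((\<lambda>r. a powr ((3 + 2/(p+1))/4) * r) ` S0)"
      unfolding m_Sset Sset_scale[OF c] S0_def a_def ..
    also have "\<dots> = a powr ((3 + 2/(p+1))/4) * m0"
      unfolding m0_def using ne bd a by (intro Inf_scale) auto
    finally have mc: "m_fun p f 0 c = a powr ((3 + 2/(p+1))/4) * m0" .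
    have ge: "(3 + 2/(p+1))/4 * e = k"
    proof -
      have p1: "p + 1 \<noteq> 0" "p - 1 \<noteq> 0" using p by auto
      have a1: "3 + 2/(p+1) = (3*p+5)/(p+1)" using p1 by (simp add: field_simps)
      have p2: "p * (p * 4) - 4 \<noteq> 0"
      proof -
        have "p * p > 1 * 1" using p by (intro mult_strict_mono) auto
        then show ?thesis by simp
      qed
      show ?thesis unfolding e_def k_def a1 using p1 p2 by (simp add: field_simps)
    qed
    have "d_fun p f 0 c = (p - 1) / (2 * (p + 1)) * (a powr ((3 + 2/(p+1))/4) * m0) powr e"
      unfolding d_fun_def mc e_def ..
    also have "(a powr ((3 + 2/(p+1))/4) * m0) powr e = a powr k * m0 powr e"
    proof -
      have "(a powr ((3 + 2/(p+1))/4) * m0) powr e = (a powr ((3 + 2/(p+1))/4)) powr e * m0 powr e"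
        using a m0p by (simp add: powr_mult)
      also have "(a powr ((3 + 2/(p+1))/4)) powr e = a powr k" unfolding powr_powr ge ..
      finally show ?thesis .
    qed
    finally show ?thesis unfolding De a_def by simp
  qed
  have sd: "deriv (deriv (\<lambda>c. d_fun p f 0 c)) c = -2 * D * k * (1 - c\<^sup>2) powr (k-2) * (1 - (2*k-1) * c\<^sup>2)"
    if c: "c\<^sup>2 < 1" for c
    by (rule second_deriv[OF _ c]) (simp add: dform mult.commute)
  define T where "T = 2 * (p - 1) / (p + 7)"
  have Tp: "T > 0" unfolding T_def using p by simp
  have kT: "2*k - 1 = 1 / T" unfolding k_def T_def using p by (simp add: field_simps)
  have pre: "-2 * D * k * (1 - c\<^sup>2) powr (k-2) < 0" if "c\<^sup>2 < 1" for c
    using Dp kp that by (simp add: mult_pos_pos)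
  have neg: "deriv (deriv (\<lambda>c. d_fun p f 0 c)) c < 0" if c: "c\<^sup>2 < 1" "c\<^sup>2 < T" for c
  proof -
    have "(2*k-1) * c\<^sup>2 < 1" unfolding kT using c Tp by (simp add: field_simps)
    then have "1 - (2*k-1) * c\<^sup>2 > 0" by simp
    then show ?thesis unfolding sd[OF c(1)] by (rule mult_neg_pos[OF pre[OF c(1)]])
  qed
  have posi: "deriv (deriv (\<lambda>c. d_fun p f 0 c)) c > 0" if c: "c\<^sup>2 < 1" "T < c\<^sup>2" for c
  proof -
    have "(2*k-1) * c\<^sup>2 > 1" unfolding kT using c Tp by (simp add: field_simps)
    then have "1 - (2*k-1) * c\<^sup>2 < 0" by simp
    then show ?thesis unfolding sd[OF c(1)] by (rule mult_neg_neg[OF pre[OF c(1)]])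
  qed
  show ?thesis
  proof (intro conjI impI allI)
    fix c :: real assume "c\<^sup>2 < 1"
    then show "d_fun p f 0 c = (1 - c\<^sup>2) powr ((3 * p + 5) / (4 * (p - 1))) * d_fun p f 0 0"
      using dform unfolding k_def D_def by blast
  next
    fix c :: real assume p9: "9 \<le> p" and c: "c\<^sup>2 < 1"
    have "1 \<le> T" unfolding T_def using p9 by (simp add: field_simps)
    then show "deriv (deriv (\<lambda>c. d_fun p f 0 c)) c < 0" using neg c by simp
  next
    fix c :: real assume "p < 9" and c: "c\<^sup>2 < 2 * (p - 1) / (p + 7)"
    have "T < 1" unfolding T_def using \<open>p < 9\<close> p by (simp add: field_simps)
    then show "deriv (deriv (\<lambda>c. d_fun p f 0 c)) c < 0" using neg c unfolding T_def by simp
  next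
    fix c :: real assume "p < 9" and c: "2 * (p - 1) / (p + 7) < c\<^sup>2 \<and> c\<^sup>2 < 1"
    then show "0 < deriv (deriv (\<lambda>c. d_fun p f 0 c)) c" using posi unfolding T_def by simp
  qed
qed


end
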